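(* (i) For every state $s\in S$ there is exactly one finite sequence of feasible transitions $s_0\xrightarrow{\alpha_1\cdots\alpha_k}s$ with all actions $\alpha_i\in\{D,I,N_=,d_-,b_+\}$ (i.e. never using $N_<$) which visits $s_0$ only at its start. (ii) For every state $s\in S$ there is exactly one finite sequence of feasible transitions from $s$ to $s_0$ that never uses the action $I$ and visits $s_0$ only at its end. In particular the BDM Markov chain is irreducible.
   Context: Fix integers $M\ge 1$ and $q\ge 2$. The augmented state set is $\overline S=\{(b_1,\dots,b_M,d;T,t): b_m,d,T\in\mathbb Z,\ 1\le t\le M+1,\ d+T+\sum_{m=1}^M b_m=0\}$, and the BDM state set is $S=\{s\in\overline S: 0\le T\le M\}$, with initial state $s_0=(0,\dots,0,0;0,M+1)$. The feasible transitions (actions) from $s=(b_1,\dots,b_M,d;T,t)\in S$ are: (a) if $t\le M$ and $b_t>d$: action $D$ (probability $(q-1)/q$) to $(b_1,\dots,b_{t-1},d,b_{t+1},\dots,b_M,b_t;T,t+1)$ (swap of $b_t$ and $d$), and action $I$ (probability $1/q$) to $(b_1,\dots,b_M,d;T,t+1)$; (b) if $t\le M$ and $b_t=d$: action $N_=$ (probability 1) to $(b_1,\dots,b_M,d;T,t+1)$; (c) if $t\le M$ and $b_t<d$: action $N_<$ (probability 1) to $(b_1,\dots,b_M,d;T,t+1)$; (d) if $t=M+1$, $T<M$: action $d_-$ (probability 1) to $(b_1,\dots,b_M,d-1;T+1,1)$; (e) if $t=M+1$, $T=M$: action $b_+$ (probability 1) to $(b_1+1,\dots,b_M+1,d;0,1)$.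 *)

theory Defs
  imports Main "HOL.Real"
begin

text \<open>BDM states: (b, d, T, t) with b = [b_1,...,b_M] (index m stored at position m-1).\<close>
type_synonym bdm_state = "int list \<times> int \<times> int \<times> nat"

datatype action = D | I | N_eq | N_less | d_minus | b_plus

definition in_S :: "nat \<Rightarrow> bdm_state \<Rightarrow> bool" where
  "in_S M s = (case s of (b, d, T, t) \<Rightarrow>
     length b = M \<and> 1 \<le> t \<and> t \<le> M + 1 \<and> d + T + sum_list b = 0 \<and> 0 \<le> T \<and> T \<le> int M)"

definition s0 :: "nat \<Rightarrow> bdm_state" where
  "s0 M = (replicate M 0, 0, 0, M + 1)"

definition step :: "nat \<Rightarrow> bdm_state \<Rightarrow> action \<Rightarrow> bdm_state \<Rightarrow> bool" where
  "step M s a s' = (in_S M s \<and> (case s of (b, d, T, t) \<Rightarrow>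
      (a = D \<and> t \<le> M \<and> b ! (t - 1) > d \<and> s' = (b[t - 1 := d], b ! (t - 1), T, t + 1))
    \<or> (a = I \<and> t \<le> M \<and> b ! (t - 1) > d \<and> s' = (b, d, T, t + 1))
    \<or> (a = N_eq \<and> t \<le> M \<and> b ! (t - 1) = d \<and> s' = (b, d, T, t + 1))
    \<or> (a = N_less \<and> t \<le> M \<and> b ! (t - 1) < d \<and> s' = (b, d, T, t + 1))
    \<or> (a = d_minus \<and> t = M + 1 \<and> T < int M \<and> s' = (b, d - 1, T + 1, 1))
    \<or> (a = b_plus \<and> t = M + 1 \<and> T = int M \<and> s' = (map (\<lambda>x. x + 1) b, d, 0, 1))))"

fun is_path :: "nat \<Rightarrow> bdm_state \<Rightarrow> (action \<times> bdm_state) list \<Rightarrow> bool" where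
  "is_path M s [] = True"
| "is_path M s ((a, s') # p) = (step M s a s' \<and> is_path M s' p)"

definition act_prob :: "nat \<Rightarrow> action \<Rightarrow> real" where
  "act_prob q a = (case a of D \<Rightarrow> (real q - 1) / real q | I \<Rightarrow> 1 / real q | _ \<Rightarrow> 1)"

definition P :: "nat \<Rightarrow> nat \<Rightarrow> bdm_state \<Rightarrow> bdm_state \<Rightarrow> real" where
  "P M q s s' = (\<Sum>a \<in> {a. step M s a s'}. act_prob q a)"

definition irreducible_BDM :: "nat \<Rightarrow> nat \<Rightarrow> bool" where
  "irreducible_BDM M q = (\<forall>s s'. in_S M s \<and> in_S M s' \<longrightarrow>
      (s, s') \<in> {(x, y). in_S M x \<and> P M q x y > 0}\<^sup>*)"

end

theory Submission
  imports Defs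
begin


fun fwd :: "nat \<Rightarrow> bdm_state \<Rightarrow> bdm_state" where
"fwd M (b,d,T,t) = (if t \<le> M then (if d < b!(t-1) then (b[t-1:=d], b!(t-1), T, t+1) else (b,d,T,t+1))
   else if T < int M then (b, d-1, T+1, 1) else (map (\<lambda>x. x+1) b, d, 0, 1))"

fun fwact :: "nat \<Rightarrow> bdm_state \<Rightarrow> action" where
"fwact M (b,d,T,t) = (if t \<le> M then (if d < b!(t-1) then D else if b!(t-1) = d then N_eq else N_less)
   else if T < int M then d_minus else b_plus)"

fun pred :: "nat \<Rightarrow> bdm_state \<Rightarrow> bdm_state" where
"pred M (b,d,T,t) = (if 2 \<le> t then (if b!(t-2) < d then (b[t-2 := d], b!(t-2), T, t-1) else (b,d,T,t-1))
   else if 1 \<le> T then (b, d+1, T-1, M+1) else (map (\<lambda>x. x-1) b, d, int M, M+1))"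

fun pact :: "nat \<Rightarrow> bdm_state \<Rightarrow> action" where
"pact M (b,d,T,t) = (if 2 \<le> t then (if b!(t-2) < d then D else if d < b!(t-2) then I else N_eq)
   else if 1 \<le> T then d_minus else b_plus)"

lemma sum_list_upd: "i < length xs \<Longrightarrow> sum_list (xs[i:=x]) = sum_list xs - xs!i + (x::int)"
  by (induction xs arbitrary: i) (auto split: nat.splits)

lemma sum_list_plus1: "sum_list (map (\<lambda>x. x + 1) b) = sum_list b + int (length b)"
  by (induction b) auto

lemma sum_list_minus1: "sum_list (map (\<lambda>x. x - 1) b) = sum_list b - int (length b)"
  by (induction b) auto

lemma step_fwd: "in_S M s \<Longrightarrow> (step M s a s' \<and> a \<noteq> I) \<longleftrightarrow> (a = fwact M s \<and> s' = fwd M s)"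
  by (cases s) (auto simp: step_def in_S_def)

lemma in_S_fwd: "in_S M s \<Longrightarrow> in_S M (fwd M s)"
  by (cases s) (auto simp: in_S_def sum_list_upd sum_list_plus1)

lemma step_pred: "in_S M y \<Longrightarrow> step M x a y \<Longrightarrow> a \<noteq> N_less \<Longrightarrow> x = pred M y \<and> a = pact M y"
  by (cases x) (auto simp: step_def in_S_def nth_list_update comp_def)

lemma pred_step: "in_S M y \<Longrightarrow> in_S M (pred M y) \<and> step M (pred M y) (pact M y) y \<and> pact M y \<noteq> N_less"
  by (cases y) (auto simp: step_def in_S_def sum_list_upd sum_list_minus1 comp_def numeral_2_eq_2 nth_list_update)


lemma lex_reach:
  fixes f :: "'a \<Rightarrow> 'a" and phi dist :: "'a \<Rightarrow> nat"
  assumes inv: "\<And>s. Inv s \<Longrightarrow> Inv (f s)"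
  and dec: "\<And>s. Inv s \<Longrightarrow> \<not> Tg s \<Longrightarrow> phi (f s) < phi s \<or> (phi (f s) = phi s \<and> dist (f s) < dist s)"
  and s: "Inv s"
  shows "\<exists>n. Tg ((f^^n) s)"
proof -
  have "\<forall>s. Inv s \<and> phi s = p \<and> dist s = q \<longrightarrow> (\<exists>n. Tg ((f^^n) s))" for p q
  proof (induction p arbitrary: q rule: less_induct)
    case (less p)
    note IHp = less.IH
    show ?case
    proof (induction q rule: less_induct)
      case (less q)
      show ?case
      proof (intro allI impI)
        fix s assume H: "Inv s \<and> phi s = p \<and> dist s = q"
        show "\<exists>n. Tg ((f^^n) s)"
        proof (cases "Tg s")
          case True then show ?thesis by (metis funpow_0)
        next
          case False
          then have D: "phi (f s) < phi s \<or> (phi (f s) = phi s \<and> dist (f s) < dist s)" using dec H by blast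
          have "Inv (f s)" using inv H by blast
          then obtain n where "Tg ((f^^n) (f s))" using D IHp less.IH H by blast
          then have "Tg ((f^^Suc n) s)" by (simp add: funpow_Suc_right del: funpow.simps)
          then show ?thesis by blast
        qed
      qed
    qed
  qed
  then show ?thesis using s by blast
qed

definition sq :: "int list \<Rightarrow> int" where "sq b = sum_list (map (\<lambda>x. x^2) b)"

lemma sq_upd: "i < length b \<Longrightarrow> sq (b[i:=x]) = sq b - (b!i)^2 + x^2"
  by (simp add: sq_def map_update sum_list_upd)

lemma sq_plus1: "sq (map (\<lambda>x. x + 1) b) = sq b + 2 * sum_list b + int (length b)"
  by (induction b) (auto simp: sq_def power2_eq_square algebra_simps)

lemma sq_minus1: "sq (map (\<lambda>x. x - 1) b) = sq b - 2 * sum_list b + int (length b)"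
  by (induction b) (auto simp: sq_def power2_eq_square algebra_simps)

lemma sq_nonneg: "0 \<le> sq b"
  unfolding sq_def by (rule sum_list_nonneg) auto

lemma L1: "(\<forall>x\<in>set b. x \<le> d) \<Longrightarrow> d < 0 \<Longrightarrow> sum_list b \<le> - int (length b)"
  by (induction b) auto

lemma L2: "(\<forall>x\<in>set b. x \<le> (0::int)) \<Longrightarrow> 0 \<le> sum_list b \<Longrightarrow> b = replicate (length b) 0"
proof (induction b)
  case (Cons a b)
  have "sum_list b \<le> 0" using Cons.prems by (induction b) auto
  then show ?case using Cons by auto
qed simp

lemma L3: "(\<forall>x\<in>set b. d \<le> x) \<Longrightarrow> 0 \<le> (d::int) \<Longrightarrow> 0 \<le> sum_list b"
proof (induction b)
  case (Cons a b)
  then have "0 \<le> sum_list b" "0 \<le> a" by auto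
  then show ?case by simp
qed simp

lemma L4: "(\<forall>x\<in>set b. 0 \<le> (x::int)) \<Longrightarrow> sum_list b \<le> 0 \<Longrightarrow> b = replicate (length b) 0"
proof (induction b)
  case (Cons a b)
  have "0 \<le> sum_list b" using Cons.prems by (induction b) auto
  then show ?case using Cons by auto
qed simp

fun PhiI :: "nat \<Rightarrow> bdm_state \<Rightarrow> int" where
"PhiI M (b,d,T,t) = d^2 + sq b + int M - T"

definition PhiN :: "nat \<Rightarrow> bdm_state \<Rightarrow> nat" where "PhiN M s = nat (PhiI M s)"

lemma nat_lex: "0 \<le> (a'::int) \<Longrightarrow> a' \<le> a \<Longrightarrow> x' < (x::nat) \<Longrightarrow> nat a' < nat a \<or> (nat a' = nat a \<and> x' < x)"
  by (cases "a' < a") auto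

lemma PhiI_nonneg: "in_S M s \<Longrightarrow> 0 \<le> PhiI M s"
proof -
  assume S: "in_S M s"
  obtain b d T t where s: "s = (b,d,T,t)" by (cases s)
  have T0: "T \<le> int M" using S by (simp add: s in_S_def)
  have "0 \<le> d^2" by simp
  moreover have "PhiI M s = d^2 + sq b + int M - T" by (simp add: s)
  ultimately show ?thesis using T0 sq_nonneg[of b] by linarith
qed

fun goodF :: "bdm_state \<Rightarrow> bool" where
"goodF (b,d,T,t) = (\<forall>i. i+1 < t \<longrightarrow> b!i \<le> d)"

definition cyc :: "nat \<Rightarrow> int \<Rightarrow> nat" where
"cyc M T = (if T = 0 then 0 else (M+1-nat T)*(M+1))"

fun distF :: "nat \<Rightarrow> bdm_state \<Rightarrow> nat" where
"distF M (b,d,T,t) = cyc M T + (M+1-t)"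


lemma fwd_good: "in_S M s \<Longrightarrow> goodF s \<Longrightarrow> goodF (fwd M s)"
proof -
  assume S: "in_S M s" and G: "goodF s"
  obtain b d T t where s: "s = (b,d,T,t)" by (cases s)
  have len: "length b = M" using S by (simp add: s in_S_def)
  show ?thesis
  proof (cases "t \<le> M")
    case True
    show ?thesis
    proof (cases "d < b!(t-1)")
      case True
      have "\<And>i. i+1 < t+1 \<Longrightarrow> b[t-1:=d]!i \<le> b!(t-1)"
      proof -
        fix i assume "i+1 < t+1"
        then have "i < t-1 \<or> i = t-1" by auto
        then show "b[t-1:=d]!i \<le> b!(t-1)"
        proof
          assume "i < t-1"
          then have "b!i \<le> d" "b[t-1:=d]!i = b!i" using G by (auto simp: s)
          then show ?thesis using True by simp
        next
          assume "i = t-1"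
          then show ?thesis using True len \<open>t \<le> M\<close> \<open>i+1 < t+1\<close> by simp
        qed
      qed
      then show ?thesis using True \<open>t \<le> M\<close> by (simp add: s)
    next
      case False
      have "\<And>i. i+1 < t+1 \<Longrightarrow> b!i \<le> d"
      proof -
        fix i assume "i+1 < t+1"
        then have "i < t-1 \<or> i = t-1" by auto
        then show "b!i \<le> d" using G False by (auto simp: s)
      qed
      then show ?thesis using False \<open>t \<le> M\<close> by (simp add: s)
    qed
  qed (auto simp: s)
qed
lemma fwd_dec: "M \<ge> 1 \<Longrightarrow> in_S M s \<Longrightarrow> goodF s \<Longrightarrow> s \<noteq> s0 M \<Longrightarrow>
   PhiN M (fwd M s) < PhiN M s \<or> (PhiN M (fwd M s) = PhiN M s \<and> distF M (fwd M s) < distF M s)"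
proof -
  assume M: "M \<ge> 1" and S: "in_S M s" and G: "goodF s" and N: "s \<noteq> s0 M"
  obtain b d T t where s: "s = (b,d,T,t)" by (cases s)
  have len: "length b = M" and t1: "1 \<le> t" "t \<le> M+1" and sum: "d + T + sum_list b = 0"
    and T0: "0 \<le> T" "T \<le> int M" using S by (auto simp: s in_S_def)
  have P0: "0 \<le> PhiI M s"
  proof -
    have "0 \<le> d^2" by simp
    moreover have "PhiI M s = d^2 + sq b + int M - T" by (simp add: s)
    ultimately show ?thesis using T0 sq_nonneg[of b] by linarith
  qed
  show ?thesis
  proof (cases "t \<le> M")
    case True
    have "PhiI M (fwd M s) = PhiI M s" using True t1 len by (auto simp: s sq_upd)
    moreover have "distF M (fwd M s) < distF M s" using True by (auto simp: s)
    ultimately show ?thesis by (simp add: PhiN_def)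
  next
    case False
    then have tM: "t = M+1" using t1 by simp
    have all: "\<forall>x\<in>set b. x \<le> d" using G len tM by (auto simp: s in_set_conv_nth)
    have d0: "0 \<le> d"
    proof (rule ccontr)
      assume "\<not> 0 \<le> d"
      then have "sum_list b \<le> - int M" using L1[OF all] len by simp
      then show False using sum T0 \<open>\<not> 0 \<le> d\<close> by linarith
    qed
    show ?thesis
    proof (cases "T = 0")
      case True
      have "d \<noteq> 0"
      proof
        assume "d = 0"
        then have "b = replicate M 0" using L2[of b] all sum True len by auto
        then show False using N \<open>d = 0\<close> True tM by (simp add: s s0_def)
      qed
      then have "PhiI M (fwd M s) < PhiI M s" using d0 True tM M
        by (simp add: s power2_eq_square algebra_simps)
      moreover have "0 \<le> PhiI M (fwd M s)" using PhiI_nonneg[OF in_S_fwd[OF S]] .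
      ultimately show ?thesis by (simp add: PhiN_def)
    next
      case False
      have "PhiI M (fwd M s) \<le> PhiI M s" using d0 tM sum len T0
        by (auto simp: s power2_eq_square algebra_simps sq_plus1)
      moreover have "0 \<le> PhiI M (fwd M s)" using PhiI_nonneg[OF in_S_fwd[OF S]] .
      moreover have "distF M (fwd M s) < distF M s"
      proof (cases "T < int M")
        case True
        define k where "k = nat T"
        have k: "T = int k" "k < M" "k \<ge> 1" using True T0 False by (simp_all add: k_def)
        have "(M - k) * (M+1) + M < (M + 1 - k) * (M+1)"
          using k by (simp add: Suc_diff_le)
        moreover have "cyc M (int k + 1) = (M - k)*(M+1)"
        proof -
          have "nat (int k + 1) = k + 1" by arith
          moreover have "int k + 1 \<noteq> 0" by arith
          ultimately show ?thesis by (simp only: cyc_def if_False) simp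
        qed
        moreover have "cyc M (int k) = (M + 1 - k)*(M+1)" using k by (simp add: cyc_def)
        moreover have "distF M (fwd M s) = cyc M (int k + 1) + M" using k tM by (simp add: s)
        moreover have "distF M s = cyc M (int k)" using k tM by (simp add: s)
        ultimately show ?thesis by linarith
      next
        case False
        then show ?thesis using T0 tM \<open>T \<noteq> 0\<close> by (simp add: s cyc_def)
      qed
      ultimately show ?thesis unfolding PhiN_def using nat_lex by blast
    qed
  qed
qed




fun goodB :: "bdm_state \<Rightarrow> bool" where
"goodB (b,d,T,t) = (\<forall>i. t-1 \<le> i \<longrightarrow> i < length b \<longrightarrow> d \<le> b!i)"

fun distB :: "nat \<Rightarrow> bdm_state \<Rightarrow> nat" where
"distB M (b,d,T,t) = nat T * (M+1) + (t-1)"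

definition zst :: "nat \<Rightarrow> bdm_state" where "zst M = (replicate M 0, 0, 0, 1)"

lemma in_S_pred: "in_S M y \<Longrightarrow> in_S M (pred M y)"
  using pred_step by blast

lemma pred_good: "in_S M s \<Longrightarrow> goodB s \<Longrightarrow> goodB (pred M s)"
proof -
  assume S: "in_S M s" and G: "goodB s"
  obtain b d T t where s: "s = (b,d,T,t)" by (cases s)
  have len: "length b = M" and t1: "1 \<le> t" "t \<le> M+1" using S by (auto simp: s in_S_def)
  show ?thesis
  proof (cases "2 \<le> t")
    case True
    show ?thesis
    proof (cases "b!(t-2) < d")
      case True
      have "\<And>i. t-2 \<le> i \<Longrightarrow> i < length b \<Longrightarrow> b!(t-2) \<le> b[t-2:=d]!i"
      proof -
        fix i assume i: "t-2 \<le> i" "i < length b"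
        then have "i = t-2 \<or> t-1 \<le> i" by auto
        then show "b!(t-2) \<le> b[t-2:=d]!i"
        proof
          assume "t-1 \<le> i"
          then have "d \<le> b!i" "b[t-2:=d]!i = b!i" using G i \<open>2 \<le> t\<close> by (auto simp: s)
          then show ?thesis using True by simp
        next
          assume "i = t-2"
          then show ?thesis using True i by simp
        qed
      qed
      then show ?thesis using True \<open>2 \<le> t\<close> by (simp add: s)
    next
      case False
      have "\<And>i. t-2 \<le> i \<Longrightarrow> i < length b \<Longrightarrow> d \<le> b!i"
      proof -
        fix i assume i: "t-2 \<le> i" "i < length b"
        then have "i = t-2 \<or> t-1 \<le> i" by auto
        then show "d \<le> b!i" using G False i by (auto simp: s)
      qed
      then show ?thesis using False \<open>2 \<le> t\<close> by (simp add: s)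
    qed
  qed (auto simp: s len)
qed

lemma pred_dec: "M \<ge> 1 \<Longrightarrow> in_S M s \<Longrightarrow> goodB s \<Longrightarrow> s \<noteq> zst M \<Longrightarrow>
   PhiN M (pred M s) < PhiN M s \<or> (PhiN M (pred M s) = PhiN M s \<and> distB M (pred M s) < distB M s)"
proof -
  assume M: "M \<ge> 1" and S: "in_S M s" and G: "goodB s" and N: "s \<noteq> zst M"
  obtain b d T t where s: "s = (b,d,T,t)" by (cases s)
  have len: "length b = M" and t1: "1 \<le> t" "t \<le> M+1" and sum: "d + T + sum_list b = 0"
    and T0: "0 \<le> T" "T \<le> int M" using S by (auto simp: s in_S_def)
  have P1: "0 \<le> PhiI M (pred M s)" using PhiI_nonneg[OF in_S_pred[OF S]] .
  show ?thesis
  proof (cases "2 \<le> t")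
    case True
    have "PhiI M (pred M s) = PhiI M s" using True t1 len by (auto simp: s sq_upd)
    moreover have "distB M (pred M s) < distB M s" using True by (auto simp: s)
    ultimately show ?thesis by (simp add: PhiN_def)
  next
    case False
    then have tM: "t = 1" using t1 by simp
    have all: "\<forall>x\<in>set b. d \<le> x" using G len tM by (auto simp: s in_set_conv_nth)
    show ?thesis
    proof (cases "T = 0")
      case True
      have "\<not> 0 \<le> d"
      proof
        assume "0 \<le> d"
        then have "0 \<le> sum_list b" using L3[OF all] by simp
        then have "d = 0" using sum True \<open>0 \<le> d\<close> by linarith
        then have "b = replicate M 0" using L4[of b] all sum True len by auto
        then show False using N \<open>d = 0\<close> True tM by (simp add: s zst_def)
      qed
      then have "PhiI M (pred M s) < PhiI M s" using sum True tM len
        by (simp add: s power2_eq_square algebra_simps sq_minus1)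
      then show ?thesis using P1 by (simp add: PhiN_def)
    next
      case False
      have d0: "d \<le> -1"
      proof (rule ccontr)
        assume "\<not> d \<le> -1"
        then have "0 \<le> sum_list b" using L3[OF all] by simp
        then show False using sum T0 False \<open>\<not> d \<le> -1\<close> by linarith
      qed
      have "PhiI M (pred M s) \<le> PhiI M s" using d0 tM False T0
        by (simp add: s power2_eq_square algebra_simps)
      moreover have "distB M (pred M s) < distB M s"
      proof -
        define k where "k = nat T"
        have k: "T = int k" "k \<ge> 1" using T0 False by (simp_all add: k_def)
        have "nat (T - 1) = k - 1" using k by simp
        moreover have "(k - 1) * (M+1) + M < k * (M+1)" 
        proof -
          obtain j where "k = Suc j" using k by (cases k) auto
          then show ?thesis by simp
        qed
        ultimately show ?thesis using k tM False by (simp add: s)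
      qed
      ultimately show ?thesis unfolding PhiN_def using nat_lex P1 by blast
    qed
  qed
qed



lemma pred_noswap: "j < t \<Longrightarrow> (\<forall>i. t-1-j \<le> i \<longrightarrow> i < t-1 \<longrightarrow> d \<le> b!i) \<Longrightarrow>
   (pred M ^^ j) (b,d,T,t) = (b,d,T,t-j)"
proof (induction j)
  case (Suc j)
  have IH: "(pred M ^^ j) (b,d,T,t) = (b,d,T,t-j)" using Suc by auto
  have "d \<le> b!(t-1-Suc j)" using Suc.prems by auto
  moreover have "t-1-Suc j = t - j - 2" by simp
  ultimately have "\<not> b!(t-j-2) < d" by simp
  moreover have "2 \<le> t - j" using Suc.prems by simp
  ultimately show ?case using IH by simp
qed simp

definition Zk :: "nat \<Rightarrow> nat \<Rightarrow> bdm_state" where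
"Zk M k = (replicate k (-1) @ replicate (M-k) 0, 0, int k, M+1)"

lemma Z_step: "1 \<le> k \<Longrightarrow> k \<le> M \<Longrightarrow> (pred M ^^ (M+1)) (Zk M k) = Zk M (k-1)"
proof -
  assume k1: "1 \<le> k" and kM: "k \<le> M"
  define B :: "int list" where "B = replicate k (-1) @ replicate (M-k) 0"
  define B' :: "int list" where "B' = replicate (k-1) (-1) @ replicate (M-k+1) 0"
  have lB: "length B = M" using kM by (simp add: B_def)
  have h1: "(pred M ^^ (M-k)) (B,0,int k,M+1) = (B,0,int k,k+1)"
  proof -
    have "(pred M ^^ (M-k)) (B,0,int k,M+1) = (B,0,int k,M+1-(M-k))"
      by (rule pred_noswap) (use kM in \<open>auto simp: B_def nth_append\<close>)
    then show ?thesis using kM by simp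
  qed
  have "B[k-1 := 0] = B'"
    by (rule nth_equalityI) (use k1 kM in \<open>auto simp: B_def B'_def nth_append nth_list_update\<close>)
  moreover have "B!(k-1) = -1" using k1 by (simp add: B_def nth_append)
  ultimately have h2: "pred M (B,0,int k,k+1) = (B',-1,int k,k)" using k1 by simp
  have h3: "(pred M ^^ (k-1)) (B',-1,int k,k) = (B',-1,int k,1)"
  proof -
    have "(pred M ^^ (k-1)) (B',-1,int k,k) = (B',-1,int k,k-(k-1))"
      by (rule pred_noswap) (use k1 kM in \<open>auto simp: B'_def nth_append\<close>)
    then show ?thesis using k1 by simp
  qed
  have h4: "pred M (B',-1,int k,1) = Zk M (k-1)"
    using k1 kM by (simp add: B'_def Zk_def of_nat_diff Suc_diff_le)
  have "M + 1 = 1 + ((k-1) + (1 + (M-k)))" using k1 kM by simp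
  then have "(pred M ^^ (M+1)) = pred M ^^ 1 \<circ> (pred M ^^ (k-1) \<circ> (pred M ^^ 1 \<circ> pred M ^^ (M-k)))"
    by (metis funpow_add)
  then show ?thesis using h1 h2 h3 h4 by (simp add: Zk_def B_def)
qed

lemma Z_reach: "k \<le> M \<Longrightarrow> (pred M ^^ ((M+1)*k)) (Zk M k) = s0 M"
proof (induction k)
  case 0
  then show ?case by (simp add: Zk_def s0_def)
next
  case (Suc k)
  have "(pred M ^^ ((M+1)*Suc k)) = (pred M ^^ ((M+1)*k)) \<circ> (pred M ^^ (M+1))"
  proof -
    have e: "(M+1)*Suc k = (M+1)*k + (M+1)" by simp
    show ?thesis by (simp only: e funpow_add)
  qed
  then show ?case using Suc Z_step[of "Suc k" M] by simp
qed

lemma zst_reach: "\<exists>n. (pred M ^^ n) (zst M) = s0 M"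
proof -
  have "pred M (zst M) = Zk M M" by (simp add: zst_def Zk_def map_replicate_const)
  then have "(pred M ^^ ((M+1)*M + 1)) (zst M) = s0 M"
    using Z_reach[of M M] by (simp add: funpow_Suc_right del: funpow.simps)
  then show ?thesis by blast
qed

lemma in_S_fwd_pow: "in_S M s \<Longrightarrow> in_S M ((fwd M ^^ k) s)"
  by (induction k) (auto simp: in_S_fwd)

lemma in_S_pred_pow: "in_S M s \<Longrightarrow> in_S M ((pred M ^^ k) s)"
  by (induction k) (auto simp: in_S_pred)

lemma fwd_pref: "in_S M s \<Longrightarrow> \<exists>k. goodF ((fwd M ^^ k) s)"
proof (induction "M + 1 - snd (snd (snd s))" arbitrary: s)
  case 0
  obtain b d T t where s: "s = (b,d,T,t)" by (cases s)
  have "t = M+1" using 0 by (auto simp: s in_S_def)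
  then have "goodF ((fwd M ^^ 1) s)" by (simp add: s)
  then show ?case by blast
next
  case (Suc n)
  obtain b d T t where s: "s = (b,d,T,t)" by (cases s)
  have t: "t \<le> M" using Suc.hyps by (simp add: s)
  have "n = M + 1 - snd (snd (snd (fwd M s)))" using Suc.hyps t by (simp add: s)
  then obtain k where "goodF ((fwd M ^^ k) (fwd M s))" using Suc.hyps(1) in_S_fwd[OF Suc.prems] by blast
  then have "goodF ((fwd M ^^ Suc k) s)" by (simp add: funpow_Suc_right del: funpow.simps)
  then show ?case by blast
qed

lemma pred_pref: "in_S M s \<Longrightarrow> \<exists>k. goodB ((pred M ^^ k) s)"
proof (induction "snd (snd (snd s))" arbitrary: s)
  case 0
  then show ?case by (cases s) (auto simp: in_S_def)
next
  case (Suc n)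
  obtain b d T t where s: "s = (b,d,T,t)" by (cases s)
  have len: "length b = M" using Suc.prems by (simp add: s in_S_def)
  show ?case
  proof (cases n)
    case 0
    then have "goodB ((pred M ^^ 1) s)" using Suc.hyps len by (auto simp: s)
    then show ?thesis by blast
  next
    case (Suc m)
    have "n = snd (snd (snd (pred M s)))" using Suc \<open>Suc n = _\<close> by (simp add: s)
    then obtain k where "goodB ((pred M ^^ k) (pred M s))" using Suc.hyps(1) in_S_pred[OF Suc.prems] by blast
    then have "goodB ((pred M ^^ Suc k) s)" by (simp add: funpow_Suc_right del: funpow.simps)
    then show ?thesis by blast
  qed
qed

lemma fwd_reach: "M \<ge> 1 \<Longrightarrow> in_S M s \<Longrightarrow> \<exists>n. (fwd M ^^ n) s = s0 M"
proof -
  assume M: "M \<ge> 1" and S: "in_S M s"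
  obtain k where G: "goodF ((fwd M ^^ k) s)" using fwd_pref[OF S] by blast
  have "\<exists>n. (fwd M ^^ n) ((fwd M ^^ k) s) = s0 M"
    by (rule lex_reach[where Inv = "\<lambda>s. in_S M s \<and> goodF s" and phi = "PhiN M" and dist = "distF M"])
       (use M G in_S_fwd_pow[OF S] in_S_fwd fwd_good fwd_dec in auto)
  then obtain n where "(fwd M ^^ n) ((fwd M ^^ k) s) = s0 M" by blast
  then have "(fwd M ^^ (n + k)) s = s0 M" by (simp add: funpow_add)
  then show ?thesis by blast
qed

lemma pred_reach: "M \<ge> 1 \<Longrightarrow> in_S M s \<Longrightarrow> \<exists>n. (pred M ^^ n) s = s0 M"
proof -
  assume M: "M \<ge> 1" and S: "in_S M s"
  obtain k where G: "goodB ((pred M ^^ k) s)" using pred_pref[OF S] by blast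
  have "\<exists>n. (pred M ^^ n) ((pred M ^^ k) s) = zst M"
    by (rule lex_reach[where Inv = "\<lambda>s. in_S M s \<and> goodB s" and phi = "PhiN M" and dist = "distB M"])
       (use M G in_S_pred_pow[OF S] in_S_pred pred_good pred_dec in auto)
  then obtain n where "(pred M ^^ n) ((pred M ^^ k) s) = zst M" by blast
  moreover obtain m where "(pred M ^^ m) (zst M) = s0 M" using zst_reach by blast
  ultimately have "(pred M ^^ (m + (n + k))) s = s0 M" by (simp add: funpow_add)
  then show ?thesis by blast
qed



lemma is_path_append: "is_path M s (p @ q) = (is_path M s p \<and> is_path M (last (s # map snd p)) q)"
proof (induction p arbitrary: s)
  case (Cons x p)
  obtain a s' where x: "x = (a, s')" by (cases x)
  show ?case using Cons[of s'] by (simp add: x)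
qed simp

lemma ex_ii: "(fwd M ^^ n) s = s0 M \<Longrightarrow> in_S M s \<Longrightarrow> \<exists>p. is_path M s p \<and> (\<forall>x\<in>set p. fst x \<noteq> I)
   \<and> s0 M \<notin> set (butlast (s # map snd p)) \<and> last (s # map snd p) = s0 M"
proof (induction n arbitrary: s)
  case 0
  then show ?case by (intro exI[of _ "[]"]) simp
next
  case (Suc n)
  show ?case
  proof (cases "s = s0 M")
    case True
    then show ?thesis by (intro exI[of _ "[]"]) simp
  next
    case False
    have "(fwd M ^^ n) (fwd M s) = s0 M" using Suc.prems by (simp add: funpow_Suc_right del: funpow.simps)
    then obtain p where p: "is_path M (fwd M s) p" "\<forall>x\<in>set p. fst x \<noteq> I"
       "s0 M \<notin> set (butlast (fwd M s # map snd p))" "last (fwd M s # map snd p) = s0 M"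
      using Suc.IH in_S_fwd[OF Suc.prems(2)] by blast
    have st: "step M s (fwact M s) (fwd M s) \<and> fwact M s \<noteq> I" using step_fwd[OF Suc.prems(2)] by blast
    show ?thesis
      by (rule exI[of _ "(fwact M s, fwd M s) # p"]) (use p st False in simp)
  qed
qed

lemma uniq_ii: "is_path M s p \<Longrightarrow> is_path M s q \<Longrightarrow> in_S M s \<Longrightarrow> (\<forall>x\<in>set p. fst x \<noteq> I) \<Longrightarrow> (\<forall>x\<in>set q. fst x \<noteq> I)
  \<Longrightarrow> s0 M \<notin> set (butlast (s # map snd p)) \<Longrightarrow> s0 M \<notin> set (butlast (s # map snd q))
  \<Longrightarrow> last (s # map snd p) = s0 M \<Longrightarrow> last (s # map snd q) = s0 M \<Longrightarrow> p = q"
proof (induction p arbitrary: s q)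
  case Nil
  then show ?case by (cases q) auto
next
  case (Cons x p)
  obtain a s' where x: "x = (a, s')" by (cases x)
  show ?case
  proof (cases q)
    case Nil
    then show ?thesis using Cons.prems x by auto
  next
    case (Cons y q')
    obtain a' s'' where y: "y = (a', s'')" by (cases y)
    have "step M s a s' \<and> a \<noteq> I" using \<open>is_path M s (x # p)\<close> \<open>\<forall>x\<in>set (x # p). fst x \<noteq> I\<close> x by auto
    then have "a = fwact M s \<and> s' = fwd M s" using step_fwd[OF Cons.prems(3)] by blast
    moreover have "step M s a' s'' \<and> a' \<noteq> I" using \<open>is_path M s q\<close> \<open>\<forall>x\<in>set q. fst x \<noteq> I\<close> Cons y by auto
    then have "a' = fwact M s \<and> s'' = fwd M s" using step_fwd[OF \<open>in_S M s\<close>] by blast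
    moreover have "p = q'"
    proof (rule Cons.IH[of s'])
      show "in_S M s'" using calculation in_S_fwd[OF \<open>in_S M s\<close>] by simp
    qed (use Cons.prems x y \<open>q = y # q'\<close> calculation in auto)
    ultimately show ?thesis using x y \<open>q = y # q'\<close> by simp
  qed
qed

lemma ex_i: "(pred M ^^ n) s = s0 M \<Longrightarrow> in_S M s \<Longrightarrow> \<exists>p. is_path M (s0 M) p \<and> (\<forall>x\<in>set p. fst x \<noteq> N_less)
   \<and> s0 M \<notin> snd ` set p \<and> last (s0 M # map snd p) = s"
proof (induction n arbitrary: s)
  case 0
  then show ?case by (intro exI[of _ "[]"]) simp
next
  case (Suc n)
  show ?case
  proof (cases "s = s0 M")
    case True
    then show ?thesis by (intro exI[of _ "[]"]) simp
  next
    case False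
    have "(pred M ^^ n) (pred M s) = s0 M" using Suc.prems by (simp add: funpow_Suc_right del: funpow.simps)
    then obtain p where p: "is_path M (s0 M) p" "\<forall>x\<in>set p. fst x \<noteq> N_less"
       "s0 M \<notin> snd ` set p" "last (s0 M # map snd p) = pred M s"
      using Suc.IH in_S_pred[OF Suc.prems(2)] by blast
    have st: "step M (pred M s) (pact M s) s \<and> pact M s \<noteq> N_less" using pred_step[OF Suc.prems(2)] by blast
    show ?thesis
      by (rule exI[of _ "p @ [(pact M s, s)]"]) (use p st False in \<open>auto simp: is_path_append\<close>)
  qed
qed

lemma uniq_i: "is_path M (s0 M) p \<Longrightarrow> is_path M (s0 M) q \<Longrightarrow> in_S M s
  \<Longrightarrow> (\<forall>x\<in>set p. fst x \<noteq> N_less) \<Longrightarrow> (\<forall>x\<in>set q. fst x \<noteq> N_less)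
  \<Longrightarrow> s0 M \<notin> snd ` set p \<Longrightarrow> s0 M \<notin> snd ` set q
  \<Longrightarrow> last (s0 M # map snd p) = s \<Longrightarrow> last (s0 M # map snd q) = s \<Longrightarrow> p = q"
proof (induction p arbitrary: s q rule: rev_induct)
  case Nil
  then show ?case by (cases q rule: rev_exhaust) auto
next
  case (snoc x p)
  obtain a y where x: "x = (a, y)" by (cases x)
  have ys: "y = s" using snoc.prems(8) x by simp
  show ?case
  proof (cases q rule: rev_exhaust)
    case Nil
    then show ?thesis using snoc.prems x ys by auto
  next
    case (snoc q' z)
    obtain a' y' where z: "z = (a', y')" by (cases z)
    have ys': "y' = s" using \<open>last (s0 M # map snd q) = s\<close> snoc z by simp
    have "step M (last (s0 M # map snd p)) a y" "a \<noteq> N_less"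
      using \<open>is_path M (s0 M) (p @ [x])\<close> \<open>\<forall>x\<in>set (p @ [x]). fst x \<noteq> N_less\<close> x
      by (auto simp: is_path_append)
    then have e1: "last (s0 M # map snd p) = pred M s \<and> a = pact M s" using step_pred \<open>in_S M s\<close> ys by blast
    have "step M (last (s0 M # map snd q')) a' y'" "a' \<noteq> N_less"
      using \<open>is_path M (s0 M) q\<close> \<open>\<forall>x\<in>set q. fst x \<noteq> N_less\<close> snoc z
      by (auto simp: is_path_append)
    then have e2: "last (s0 M # map snd q') = pred M s \<and> a' = pact M s" using step_pred \<open>in_S M s\<close> ys' by blast
    have "p = q'"
    proof (rule snoc.IH[where s = "pred M s"])
      show "in_S M (pred M s)" using in_S_pred \<open>in_S M s\<close> by blast
    qed (use snoc.prems \<open>q = q' @ [z]\<close> e1 e2 in \<open>auto simp: is_path_append\<close>)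
    then show ?thesis using x z ys ys' e1 e2 \<open>q = q' @ [z]\<close> by simp
  qed
qed

lemma action_UNIV: "(UNIV :: action set) = {D, I, N_eq, N_less, d_minus, b_plus}"
  apply (rule set_eqI)
  subgoal for x by (cases x) auto
  done

lemma step_P: "q \<ge> 2 \<Longrightarrow> step M x a y \<Longrightarrow> 0 < P M q x y"
  unfolding P_def
proof (rule sum_pos)
  have "finite (UNIV :: action set)" by (simp add: action_UNIV)
  then show "finite {a. step M x a y}" using finite_subset[OF subset_UNIV] by blast
  show "step M x a y \<Longrightarrow> {a. step M x a y} \<noteq> {}" by blast
  fix a'
  assume "q \<ge> 2"
  then show "0 < act_prob q a'" by (cases a') (auto simp: act_prob_def)
qed

lemma path_rtrancl: "q \<ge> 2 \<Longrightarrow> is_path M x p \<Longrightarrow>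
   (x, last (x # map snd p)) \<in> {(x, y). in_S M x \<and> P M q x y > 0}\<^sup>*"
proof (induction p arbitrary: x)
  case (Cons z p)
  obtain a y where z: "z = (a, y)" by (cases z)
  have st: "step M x a y" and ip: "is_path M y p" using Cons.prems z by auto
  have "(x, y) \<in> {(x, y). in_S M x \<and> P M q x y > 0}"
    using st step_P[OF Cons.prems(1) st] by (auto simp: step_def)
  moreover have "(y, last (y # map snd p)) \<in> {(x, y). in_S M x \<and> P M q x y > 0}\<^sup>*"
    using Cons.IH[OF Cons.prems(1) ip] .
  ultimately show ?case using z by (auto intro: converse_rtrancl_into_rtrancl)
qed simp

theorem theorem10:
  fixes M q :: nat
  assumes "M \<ge> 1" and "q \<ge> 2"
  shows "(\<forall>s. in_S M s \<longrightarrow>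
           (\<exists>!p. is_path M (s0 M) p \<and> (\<forall>x \<in> set p. fst x \<noteq> N_less)
                 \<and> s0 M \<notin> snd ` set p \<and> last (s0 M # map snd p) = s))
       \<and> (\<forall>s. in_S M s \<longrightarrow>
           (\<exists>!p. is_path M s p \<and> (\<forall>x \<in> set p. fst x \<noteq> I)
                 \<and> s0 M \<notin> set (butlast (s # map snd p)) \<and> last (s # map snd p) = s0 M))
       \<and> irreducible_BDM M q"
proof (intro conjI allI impI)
  fix s assume S: "in_S M s"
  obtain n where "(pred M ^^ n) s = s0 M" using pred_reach[OF assms(1) S] by blast
  then obtain p where p: "is_path M (s0 M) p \<and> (\<forall>x \<in> set p. fst x \<noteq> N_less)
                 \<and> s0 M \<notin> snd ` set p \<and> last (s0 M # map snd p) = s" using ex_i S by blast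
  show "\<exists>!p. is_path M (s0 M) p \<and> (\<forall>x \<in> set p. fst x \<noteq> N_less)
                 \<and> s0 M \<notin> snd ` set p \<and> last (s0 M # map snd p) = s"
    by (rule ex1I[of _ p]) (use p uniq_i S in blast)+
next
  fix s assume S: "in_S M s"
  obtain n where "(fwd M ^^ n) s = s0 M" using fwd_reach[OF assms(1) S] by blast
  then obtain p where p: "is_path M s p \<and> (\<forall>x \<in> set p. fst x \<noteq> I)
                 \<and> s0 M \<notin> set (butlast (s # map snd p)) \<and> last (s # map snd p) = s0 M" using ex_ii S by blast
  show "\<exists>!p. is_path M s p \<and> (\<forall>x \<in> set p. fst x \<noteq> I)
                 \<and> s0 M \<notin> set (butlast (s # map snd p)) \<and> last (s # map snd p) = s0 M"
    by (rule ex1I[of _ p]) (use p uniq_ii S in blast)+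
next
  show "irreducible_BDM M q"
    unfolding irreducible_BDM_def
  proof (intro allI impI)
    fix s s' assume SS: "in_S M s \<and> in_S M s'"
    obtain n where "(fwd M ^^ n) s = s0 M" using fwd_reach[OF assms(1)] SS by blast
    then obtain p where p: "is_path M s p" "last (s # map snd p) = s0 M" using ex_ii SS by blast
    obtain m where "(pred M ^^ m) s' = s0 M" using pred_reach[OF assms(1)] SS by blast
    then obtain p' where p': "is_path M (s0 M) p'" "last (s0 M # map snd p') = s'" using ex_i SS by blast
    show "(s, s') \<in> {(x, y). in_S M x \<and> P M q x y > 0}\<^sup>*"
      using path_rtrancl[OF assms(2) p(1)] path_rtrancl[OF assms(2) p'(1)] p(2) p'(2)
      by (metis (no_types, lifting) rtrancl_trans)
  qed
qed

end
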